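(* Let $P$ be a fixed tree poset with $|P|$ elements. For all integers $q\geq1$ and reals $\varepsilon>0$ there exists $\delta>0$ such that the following holds. If $\mathcal{F}\subseteq\widetilde{\mathcal{B}}_n$ satisfies $\mu(\mathcal{F})\geq q-1+\varepsilon$, then there exists a nested sequence $\mathcal{M}^{|P|}\subseteq\mathcal{M}^{|P|-1}\subseteq\cdots\subseteq\mathcal{M}^0$ of families of $q$-marked chains with markers from $\mathcal{F}$ such that for all $j\in[|P|]$: - for each $(\chi,Q)\in\mathcal{M}^j$ and $F\in Q$, $F$ is $\delta$-robust with respect to $\mathcal{M}^{j-1}$; - for each $i\in[q]$, $|\mathcal{L}^i(\mathcal{M}^j)|\geq\frac{2\varepsilon}{3q}\min_{F\in\mathcal{F}}\binom{n}{|F|}$.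
   Context: $\widetilde{\mathcal{B}}_n=\{F\subseteq[n]: |\,|F|-n/2\,|<2\sqrt{n\ln n}\}$. $\mu(\mathcal{F})=\sum_{F\in\mathcal{F}}1/\binom{n}{|F|}$ (Lubell weight). $\mathcal{C}$ is the set of full chains $\emptyset=C_0\subsetneq\cdots\subsetneq C_n=[n]$ (identified with their member sets). A $q$-chain is $(F_1,\dots,F_q)$ with $F_1\supsetneq\cdots\supsetneq F_q$, $F_i$ being its $i$-th member; a $q$-marked chain with markers from $\mathcal{F}$ is $(\chi,Q)$ with $\chi\in\mathcal{C}$ and $Q$ a $q$-chain of members of $\mathcal{F}$ lying on $\chi$. For a family $\mathcal{M}$ of $q$-marked chains, $\mathcal{L}^i(\mathcal{M})$ is the set of $D$ that are the $i$-th member of $Q$ for some $(\chi,Q)\in\mathcal{M}$, and $\mathcal{M}(F,i)$ is the set of $(\chi,Q)\in\mathcal{M}$ with $F$ the $i$-th member of $Q$. With $\chi_0$ a uniformly random full chain: $F$ is $(i,\delta)$-lower bad w.r.t. $\mathcal{M}$ if $\mathcal{M}(F,i)\neq\emptyset$ and there is $\mathcal{W}\subseteq2^{[n]}$ with (a) $D\subseteq F$ for all $D\in\mathcal{W}$, (b) $Q\cap\mathcal{W}\neq\emptyset$ for all $(\chi,Q)\in\mathcal{M}(F,i)$, (c) $\Pr[\chi_0\cap\mathcal{W}\neq\emptyset\mid F\in\chi_0]\le\delta$; $(i,\delta)$-upper bad is defined identically with $D\supseteq F$ in (a). $F$ is $\delta$-robust w.r.t. $\mathcal{M}$ if for all $i\in[q]$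 it is neither $(i,\delta)$-lower bad nor $(i,\delta)$-upper bad. *)

theory Defs
  imports Complex_Main
begin

definition poset_on :: "'a set \<Rightarrow> ('a \<Rightarrow> 'a \<Rightarrow> bool) \<Rightarrow> bool" where
  "poset_on P le \<longleftrightarrow>
     (\<forall>x\<in>P. le x x) \<and>
     (\<forall>x\<in>P. \<forall>y\<in>P. le x y \<and> le y x \<longrightarrow> x = y) \<and>
     (\<forall>x\<in>P. \<forall>y\<in>P. \<forall>z\<in>P. le x y \<and> le y z \<longrightarrow> le x z)"

definition covers :: "'a set \<Rightarrow> ('a \<Rightarrow> 'a \<Rightarrow> bool) \<Rightarrow> 'a \<Rightarrow> 'a \<Rightarrow> bool" where
  "covers P le x y \<longleftrightarrow> x \<in> P \<and> y \<in> P \<and> le x y \<and> x \<noteq> y \<and>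
     \<not> (\<exists>z\<in>P. le x z \<and> le z y \<and> z \<noteq> x \<and> z \<noteq> y)"

definition hasse_edges :: "'a set \<Rightarrow> ('a \<Rightarrow> 'a \<Rightarrow> bool) \<Rightarrow> 'a set set" where
  "hasse_edges P le = {{x, y} | x y. covers P le x y}"

definition tree_poset :: "'a set \<Rightarrow> ('a \<Rightarrow> 'a \<Rightarrow> bool) \<Rightarrow> bool" where
  "tree_poset P le \<longleftrightarrow> finite P \<and> P \<noteq> {} \<and> poset_on P le \<and>
     (\<forall>x\<in>P. \<forall>y\<in>P. (\<lambda>a b. covers P le a b \<or> covers P le b a)\<^sup>*\<^sup>* x y) \<and>
     card (hasse_edges P le) = card P - 1"

definition Btilde :: "nat \<Rightarrow> nat set set" where
  "Btilde n = {F. F \<subseteq> {1..n} \<and>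
     \<bar>real (card F) - real n / 2\<bar> < 2 * sqrt (real n * ln (real n))}"

definition lubell :: "nat \<Rightarrow> nat set set \<Rightarrow> real" where
  "lubell n \<F> = (\<Sum>F\<in>\<F>. 1 / real (n choose card F))"

text \<open>Full chains, identified with their sets of members.\<close>
definition full_chains :: "nat \<Rightarrow> nat set set set" where
  "full_chains n = {C ` {0..n} | C. C 0 = {} \<and> C n = {1..n} \<and> (\<forall>i<n. C i \<subset> C (Suc i))}"

text \<open>A q-chain (F_1, ..., F_q) with F_1 strictly containing F_2 etc.; the i-th member
  (1-based) is Q ! (i - 1).\<close>
definition q_chain :: "nat \<Rightarrow> nat set list \<Rightarrow> bool" where
  "q_chain q Q \<longleftrightarrow> length Q = q \<and> (\<forall>i. Suc i < q \<longrightarrow> Q ! (Suc i) \<subset> Q ! i)"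

definition marked_chains :: "nat \<Rightarrow> nat \<Rightarrow> nat set set \<Rightarrow> (nat set set \<times> nat set list) set" where
  "marked_chains n q \<F> = {(\<chi>, Q). \<chi> \<in> full_chains n \<and> q_chain q Q \<and> set Q \<subseteq> \<F> \<and> set Q \<subseteq> \<chi>}"

definition Lmem :: "nat \<Rightarrow> (nat set set \<times> nat set list) set \<Rightarrow> nat set set" where
  "Lmem i M = {D. \<exists>(\<chi>, Q)\<in>M. Q ! (i - 1) = D}"

definition Msub :: "(nat set set \<times> nat set list) set \<Rightarrow> nat set \<Rightarrow> nat \<Rightarrow> (nat set set \<times> nat set list) set" where
  "Msub M F i = {(\<chi>, Q) \<in> M. Q ! (i - 1) = F}"

text \<open>Pr[chi_0 meets W | F in chi_0] for a uniformly random full chain chi_0.\<close>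
definition cond_prob :: "nat \<Rightarrow> nat set set \<Rightarrow> nat set \<Rightarrow> real" where
  "cond_prob n W F =
     real (card {\<chi> \<in> full_chains n. F \<in> \<chi> \<and> \<chi> \<inter> W \<noteq> {}}) /
     real (card {\<chi> \<in> full_chains n. F \<in> \<chi>})"

definition lower_bad :: "nat \<Rightarrow> (nat set set \<times> nat set list) set \<Rightarrow> nat \<Rightarrow> real \<Rightarrow> nat set \<Rightarrow> bool" where
  "lower_bad n M i \<delta> F \<longleftrightarrow> Msub M F i \<noteq> {} \<and>
     (\<exists>W. W \<subseteq> Pow {1..n} \<and> (\<forall>D\<in>W. D \<subseteq> F) \<and>
          (\<forall>(\<chi>, Q)\<in>Msub M F i. set Q \<inter> W \<noteq> {}) \<and> cond_prob n W F \<le> \<delta>)"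

definition upper_bad :: "nat \<Rightarrow> (nat set set \<times> nat set list) set \<Rightarrow> nat \<Rightarrow> real \<Rightarrow> nat set \<Rightarrow> bool" where
  "upper_bad n M i \<delta> F \<longleftrightarrow> Msub M F i \<noteq> {} \<and>
     (\<exists>W. W \<subseteq> Pow {1..n} \<and> (\<forall>D\<in>W. F \<subseteq> D) \<and>
          (\<forall>(\<chi>, Q)\<in>Msub M F i. set Q \<inter> W \<noteq> {}) \<and> cond_prob n W F \<le> \<delta>)"

definition robust :: "nat \<Rightarrow> nat \<Rightarrow> (nat set set \<times> nat set list) set \<Rightarrow> real \<Rightarrow> nat set \<Rightarrow> bool" where
  "robust n q M \<delta> F \<longleftrightarrow> (\<forall>i\<in>{1..q}. \<not> lower_bad n M i \<delta> F \<and> \<not> upper_bad n M i \<delta> F)"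

end

theory Submission
  imports Defs
begin


lemma fc_mono:
  assumes "\<forall>i<n. C i \<subset> C (Suc i)" "i \<le> j" "j \<le> n"
  shows "C i \<subseteq> C j"
  using assms(2,3)
proof (induction j)
  case 0 then show ?case by simp
next
  case (Suc j)
  show ?case
  proof (cases "i = Suc j")
    case False
    then have "C i \<subseteq> C j" using Suc by simp
    moreover have "C j \<subset> C (Suc j)" using assms(1) Suc.prems by simp
    ultimately show ?thesis by blast
  qed simp
qed

lemma fc_card_aux:
  assumes "\<forall>i<n. C i \<subset> C (Suc i)" "C n = {1..n}" "i \<le> j" "j \<le> n"
  shows "card (C j) \<ge> card (C i) + (j - i)"
  using assms(3,4)
proof (induction j)
  case 0 then show ?case by simp
next
  case (Suc j)
  show ?case
  proof (cases "i = Suc j")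
    case False
    then have "card (C j) \<ge> card (C i) + (j - i)" using Suc by simp
    moreover have "C j \<subset> C (Suc j)" using assms(1) Suc.prems by simp
    moreover have "finite (C (Suc j))"
      using fc_mono[OF assms(1), of "Suc j" n] Suc.prems assms(2) finite_subset by auto
    ultimately have "card (C (Suc j)) > card (C j)" by (simp add: psubset_card_mono)
    moreover have "card (C j) \<ge> card (C i) + (j - i)" using Suc False by simp
    ultimately show ?thesis using False Suc.prems by linarith
  qed simp
qed

lemma fc_card:
  assumes "C 0 = {}" "\<forall>i<n. C i \<subset> C (Suc i)" "C n = {1..n}" "i \<le> n"
  shows "card (C i) = i"
proof -
  have "card (C i) \<ge> card (C 0) + i" using fc_card_aux[OF assms(2,3), of 0 i] assms(4) by simp
  moreover have "card (C n) \<ge> card (C i) + (n - i)" using fc_card_aux[OF assms(2,3), of i n] assms(4) by simp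
  ultimately show ?thesis using assms by simp
qed

lemma fc_props:
  assumes "\<chi> \<in> full_chains n"
  shows "\<chi> \<subseteq> Pow {1..n}" "finite \<chi>" "\<forall>X\<in>\<chi>. \<forall>Y\<in>\<chi>. X \<subseteq> Y \<or> Y \<subseteq> X"
    "\<And>k. k \<le> n \<Longrightarrow> \<exists>!X. X \<in> \<chi> \<and> card X = k"
proof -
  obtain C where C: "\<chi> = C ` {0..n}" "C 0 = {}" "C n = {1..n}" "\<forall>i<n. C i \<subset> C (Suc i)"
    using assms unfolding full_chains_def by blast
  show "\<chi> \<subseteq> Pow {1..n}" using C fc_mono[OF C(4), of _ n] by fastforce
  show "finite \<chi>" using C by simp
  show "\<forall>X\<in>\<chi>. \<forall>Y\<in>\<chi>. X \<subseteq> Y \<or> Y \<subseteq> X"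
  proof (intro ballI)
    fix X Y assume "X \<in> \<chi>" "Y \<in> \<chi>"
    then obtain i j where "i \<le> n" "j \<le> n" "X = C i" "Y = C j" using C by auto
    then show "X \<subseteq> Y \<or> Y \<subseteq> X" using fc_mono[OF C(4)] by (metis nat_le_linear)
  qed
  fix k assume k: "k \<le> n"
  show "\<exists>!X. X \<in> \<chi> \<and> card X = k"
  proof
    show "C k \<in> \<chi> \<and> card (C k) = k" using C fc_card[OF C(2,4,3) k] k by auto
  next
    fix X assume "X \<in> \<chi> \<and> card X = k"
    then obtain i where "i \<le> n" "X = C i" "card X = k" using C by auto
    then show "X = C k" using fc_card[OF C(2,4,3)] by auto
  qed
qed

lemma fc_finite: "finite (full_chains n)"
proof -
  have "full_chains n \<subseteq> Pow (Pow {1..n})" using fc_props(1) by blast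
  then show ?thesis by (rule finite_subset) simp
qed

lemma fc_nonempty: "(\<lambda>i. {1..i}) ` {0..n} \<in> full_chains n"
  unfolding full_chains_def
  apply (rule CollectI, rule exI[of _ "\<lambda>i. {1..i}"])
  by auto



definition cnt :: "nat \<Rightarrow> nat set \<Rightarrow> nat" where
  "cnt n F = card {\<chi> \<in> full_chains n. F \<in> \<chi>}"

lemma swap_count:
  assumes "finite X" "finite G"
  shows "(\<Sum>g\<in>G. card {x\<in>X. g \<in> x}) = (\<Sum>x\<in>X. card {g\<in>G. g \<in> x})"
proof -
  have a: "card {x\<in>X. g \<in> x} = (\<Sum>x\<in>X. if g \<in> x then 1 else 0)" for g
    using assms by (simp add: sum.inter_filter[symmetric])
  have b: "card {g\<in>G. g \<in> x} = (\<Sum>g\<in>G. if g \<in> x then 1 else 0)" for x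
    using assms by (simp add: sum.inter_filter[symmetric])
  show ?thesis unfolding a b by (rule sum.swap)
qed

lemma perm_exists:
  fixes n :: nat
  assumes "F \<subseteq> {1..n}" "G \<subseteq> {1..n}" "card F = card G"
  shows "\<exists>\<pi>. bij_betw \<pi> {1..n} {1..n} \<and> \<pi> ` F = G"
proof -
  have fF: "finite F" "finite G" using assms(1,2) finite_subset[of _ "{1..n}"] by auto
  obtain f1 where f1: "bij_betw f1 F G" using finite_same_card_bij[OF fF assms(3)] by blast
  have "card ({1..n} - F) = card ({1..n} - G)"
    using assms fF by (simp add: card_Diff_subset)
  then obtain f2 where f2: "bij_betw f2 ({1..n} - F) ({1..n} - G)"
    using finite_same_card_bij by (metis finite_Diff finite_atLeastAtMost)
  have "bij_betw (\<lambda>x. if x \<in> F then f1 x else f2 x) (F \<union> ({1..n} - F)) (G \<union> ({1..n} - G))"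
    by (rule bij_betw_disjoint_Un[OF f1 f2]) auto
  moreover have "F \<union> ({1..n} - F) = {1..n}" "G \<union> ({1..n} - G) = {1..n}" using assms by auto
  moreover have "(\<lambda>x. if x \<in> F then f1 x else f2 x) ` F = G"
    using f1 by (simp add: bij_betw_def)
  ultimately show ?thesis by metis
qed

lemma fc_perm:
  assumes "bij_betw \<pi> {1..n} {1..n}" "\<chi> \<in> full_chains n"
  shows "image \<pi> ` \<chi> \<in> full_chains n"
proof -
  obtain C where C: "\<chi> = C ` {0..n}" "C 0 = {}" "C n = {1..n}" "\<forall>i<n. C i \<subset> C (Suc i)"
    using assms(2) unfolding full_chains_def by blast
  have sub: "C i \<subseteq> {1..n}" if "i \<le> n" for i using fc_mono[OF C(4) that] C(3) by simp
  have inj: "inj_on \<pi> {1..n}" using assms(1) bij_betw_def by blast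
  have st: "\<pi> ` C i \<subset> \<pi> ` C (Suc i)" if i: "i < n" for i
  proof -
    have a: "C i \<subset> C (Suc i)" using C(4) i by simp
    have b: "C (Suc i) \<subseteq> {1..n}" "C i \<subseteq> {1..n}" using sub i by simp_all
    have "\<pi> ` C i \<noteq> \<pi> ` C (Suc i)"
    proof
      assume "\<pi> ` C i = \<pi> ` C (Suc i)"
      then have "C i = C (Suc i)" using inj_on_image_eq_iff[OF inj b(2) b(1)] by simp
      then show False using a by simp
    qed
    moreover have "\<pi> ` C i \<subseteq> \<pi> ` C (Suc i)" using a by (intro image_mono) simp
    ultimately show ?thesis by (simp add: psubset_eq)
  qed
  have e1: "\<pi> ` C n = {1..n}" using C(3) assms(1) by (simp add: bij_betw_def)
  have e2: "image \<pi> ` \<chi> = (\<lambda>i. \<pi> ` C i) ` {0..n}" using C(1) by (simp add: image_image)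
  have e3: "\<pi> ` C 0 = {}" using C(2) by simp
  show ?thesis unfolding full_chains_def e2
    apply (rule CollectI)
    apply (rule exI[of _ "\<lambda>i. \<pi> ` C i"])
    using e1 e3 st by simp
qed

lemma cnt_le:
  assumes "F \<subseteq> {1..n}" "G \<subseteq> {1..n}" "card F = card G"
  shows "cnt n F \<le> cnt n G"
proof -
  obtain \<pi> where p: "bij_betw \<pi> {1..n} {1..n}" "\<pi> ` F = G" using perm_exists[OF assms] by blast
  have inj: "inj_on \<pi> {1..n}" using p bij_betw_def by blast
  have inj2: "inj_on (image (image \<pi>)) (Pow (Pow {1..n}))"
    by (rule inj_on_image_Pow[OF inj_on_image_Pow[OF inj]])
  have "inj_on (image (image \<pi>)) {\<chi> \<in> full_chains n. F \<in> \<chi>}"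
    by (rule inj_on_subset[OF inj2]) (use fc_props(1) in blast)
  moreover have "image (image \<pi>) ` {\<chi> \<in> full_chains n. F \<in> \<chi>} \<subseteq> {\<chi> \<in> full_chains n. G \<in> \<chi>}"
    using fc_perm[OF p(1)] p(2) by blast
  moreover have "finite {\<chi> \<in> full_chains n. G \<in> \<chi>}" using fc_finite by simp
  ultimately show ?thesis unfolding cnt_def
    by (rule card_inj_on_le)
qed

lemma cnt_eq:
  assumes "F \<subseteq> {1..n}" "G \<subseteq> {1..n}" "card F = card G"
  shows "cnt n F = cnt n G"
  using cnt_le[OF assms] cnt_le[OF assms(2,1) assms(3)[symmetric]] by simp

lemma cnt_sum_level:
  assumes "k \<le> n"
  shows "(\<Sum>G\<in>{G. G \<subseteq> {1..n} \<and> card G = k}. cnt n G) = card (full_chains n)"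
proof -
  let ?K = "{G. G \<subseteq> {1..n} \<and> card G = k}"
  have fK: "finite ?K" by simp
  have "(\<Sum>G\<in>?K. cnt n G) = (\<Sum>\<chi>\<in>full_chains n. card {G\<in>?K. G \<in> \<chi>})"
    unfolding cnt_def by (rule swap_count[OF fc_finite fK])
  also have "\<dots> = (\<Sum>\<chi>\<in>full_chains n. 1)"
  proof (rule sum.cong[OF refl])
    fix \<chi> assume h: "\<chi> \<in> full_chains n"
    obtain X where X: "X \<in> \<chi>" "card X = k" "\<And>Y. Y \<in> \<chi> \<and> card Y = k \<Longrightarrow> Y = X"
      using fc_props(4)[OF h assms] by blast
    have "X \<subseteq> {1..n}" using fc_props(1)[OF h] X(1) by blast
    then have "{G\<in>?K. G \<in> \<chi>} = {X}" using X by blast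
    then show "card {G\<in>?K. G \<in> \<chi>} = 1" by simp
  qed
  finally show ?thesis by simp
qed

lemma cnt_formula:
  assumes "F \<subseteq> {1..n}"
  shows "real (cnt n F) = real (card (full_chains n)) / real (n choose card F)"
proof -
  let ?k = "card F"
  let ?K = "{G. G \<subseteq> {1..n} \<and> card G = ?k}"
  have kn: "?k \<le> n" using card_mono[OF _ assms] by simp
  have pos: "(n choose ?k) > 0" using kn by simp
  have "(\<Sum>G\<in>?K. cnt n G) = (\<Sum>G\<in>?K. cnt n F)"
  proof (rule sum.cong[OF refl])
    fix G assume "G \<in> ?K"
    then show "cnt n G = cnt n F" using cnt_eq[of G n F] assms by simp
  qed
  then have "card (full_chains n) = card ?K * cnt n F" using cnt_sum_level[OF kn] by simp
  moreover have "card ?K = n choose ?k" using n_subsets[of "{1..n}" ?k] by simp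
  ultimately have "real (card (full_chains n)) = real (n choose ?k) * real (cnt n F)" by simp
  then show ?thesis using pos by simp
qed

lemma sum_cnt:
  assumes "\<G> \<subseteq> Pow {1..n}"
  shows "real (\<Sum>\<chi>\<in>full_chains n. card (\<G> \<inter> \<chi>)) = real (card (full_chains n)) * lubell n \<G>"
proof -
  have fG: "finite \<G>" using assms by (rule finite_subset) simp
  have "(\<Sum>\<chi>\<in>full_chains n. card (\<G> \<inter> \<chi>)) = (\<Sum>\<chi>\<in>full_chains n. card {g\<in>\<G>. g \<in> \<chi>})"
  proof (rule sum.cong[OF refl])
    fix \<chi> show "card (\<G> \<inter> \<chi>) = card {g\<in>\<G>. g \<in> \<chi>}" by (rule arg_cong[of _ _ card]) blast
  qed
  also have "\<dots> = (\<Sum>g\<in>\<G>. cnt n g)" unfolding cnt_def by (rule swap_count[OF fc_finite fG, symmetric])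
  finally have "real (\<Sum>\<chi>\<in>full_chains n. card (\<G> \<inter> \<chi>)) = (\<Sum>g\<in>\<G>. real (cnt n g))" by simp
  also have "\<dots> = (\<Sum>g\<in>\<G>. real (card (full_chains n)) * (1 / real (n choose card g)))"
  proof (rule sum.cong[OF refl])
    fix g assume "g \<in> \<G>"
    then have "g \<subseteq> {1..n}" using assms by blast
    then show "real (cnt n g) = real (card (full_chains n)) * (1 / real (n choose card g))"
      using cnt_formula[of g n] by simp
  qed
  finally show ?thesis unfolding lubell_def by (simp add: sum_distrib_left)
qed



definition valid :: "nat \<Rightarrow> (nat set \<times> nat) set \<Rightarrow> nat set set \<Rightarrow> nat set list set" where
  "valid q A \<chi> = {Q. q_chain q Q \<and> set Q \<subseteq> \<chi> \<and> (\<forall>k<q. (Q!k, Suc k) \<in> A)}"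

definition packing :: "nat set list set \<Rightarrow> bool" where
  "packing P \<longleftrightarrow> (\<forall>Q1\<in>P. \<forall>Q2\<in>P. Q1 \<noteq> Q2 \<longrightarrow> set Q1 \<inter> set Q2 = {})"

definition Tpack :: "nat \<Rightarrow> (nat set \<times> nat) set \<Rightarrow> nat set set \<Rightarrow> nat" where
  "Tpack q A \<chi> = Max (card ` {P. P \<subseteq> valid q A \<chi> \<and> packing P})"

lemma valid_finite:
  assumes "finite \<chi>"
  shows "finite (valid q A \<chi>)"
proof -
  have "valid q A \<chi> \<subseteq> {xs. set xs \<subseteq> \<chi> \<and> length xs = q}"
    unfolding valid_def q_chain_def by blast
  then show ?thesis by (rule finite_subset) (rule finite_lists_length_eq[OF assms])
qed

lemma packs_finite:
  assumes "finite \<chi>"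
  shows "finite {P. P \<subseteq> valid q A \<chi> \<and> packing P}"
proof -
  have "{P. P \<subseteq> valid q A \<chi> \<and> packing P} \<subseteq> Pow (valid q A \<chi>)" by blast
  then show ?thesis by (rule finite_subset) (simp add: valid_finite[OF assms])
qed

lemma Tpack_ge:
  assumes "finite \<chi>" "P \<subseteq> valid q A \<chi>" "packing P"
  shows "card P \<le> Tpack q A \<chi>"
  unfolding Tpack_def
  by (rule Max_ge) (use packs_finite[OF assms(1)] assms(2,3) in simp_all)

lemma Tpack_attained:
  assumes "finite \<chi>"
  shows "\<exists>P. P \<subseteq> valid q A \<chi> \<and> packing P \<and> card P = Tpack q A \<chi>"
proof -
  have ne: "{P. P \<subseteq> valid q A \<chi> \<and> packing P} \<noteq> {}"
    using packing_def by auto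
  have "Tpack q A \<chi> \<in> card ` {P. P \<subseteq> valid q A \<chi> \<and> packing P}"
    unfolding Tpack_def by (rule Max_in) (use packs_finite[OF assms] ne in simp_all)
  then show ?thesis by auto
qed

lemma qchain_strict:
  assumes "q_chain q Q" "i < j" "j < q"
  shows "Q!j \<subset> Q!i"
  using assms(2,3)
proof (induction j)
  case 0 then show ?case by simp
next
  case (Suc j)
  have s: "Q!(Suc j) \<subset> Q!j" using assms(1) Suc.prems unfolding q_chain_def by blast
  show ?case
  proof (cases "i = j")
    case True then show ?thesis using s by simp
  next
    case False
    then have "Q!j \<subset> Q!i" using Suc by simp
    then show ?thesis using s by (meson psubset_trans)
  qed
qed

lemma qchain_distinct:
  assumes "q_chain q Q"
  shows "distinct Q"
proof -
  have len: "length Q = q" using assms q_chain_def by simp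
  show ?thesis unfolding distinct_conv_nth
  proof (intro allI impI)
    fix i j assume h: "i < length Q" "j < length Q" "i \<noteq> j"
    show "Q!i \<noteq> Q!j"
    proof (cases "i < j")
      case True then show ?thesis using qchain_strict[OF assms True] h len by auto
    next
      case False then have "j < i" using h by simp
      then show ?thesis using qchain_strict[OF assms \<open>j < i\<close>] h len by auto
    qed
  qed
qed

lemma chain_to_qchain:
  assumes "\<forall>X\<in>S. \<forall>Y\<in>S. X \<subseteq> Y \<or> Y \<subseteq> X" "finite S" "\<forall>X\<in>S. finite X" "k \<le> card S"
  shows "\<exists>Q. q_chain k Q \<and> set Q \<subseteq> S"
  using assms
proof (induction k arbitrary: S)
  case 0
  then show ?case by (intro exI[of _ "[]"]) (simp add: q_chain_def)
next
  case (Suc k)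
  then have ne: "S \<noteq> {}" by auto
  obtain G where G: "G \<in> S" "\<forall>Y\<in>S. card Y \<le> card G"
  proof -
    have f: "finite (card ` S)" using Suc.prems(2) by simp
    have "Max (card ` S) \<in> card ` S" using f ne by (intro Max_in) simp_all
    then obtain G where "G \<in> S" "card G = Max (card ` S)" by auto
    moreover have "\<forall>Y\<in>S. card Y \<le> Max (card ` S)" using f by simp
    ultimately show ?thesis using that by metis
  qed
  have top: "Y \<subset> G" if "Y \<in> S" "Y \<noteq> G" for Y
  proof -
    have "Y \<subseteq> G \<or> G \<subseteq> Y" using Suc.prems(1) that G(1) by blast
    moreover have "\<not> G \<subset> Y"
    proof
      assume "G \<subset> Y"
      then have "card G < card Y" using Suc.prems(3) that(1) by (simp add: psubset_card_mono)
      then show False using G(2) that(1) by force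
    qed
    ultimately show ?thesis using that(2) by blast
  qed
  let ?S = "S - {G}"
  have "k \<le> card ?S" using Suc.prems(4) G(1) Suc.prems(2) by simp
  then obtain Q where Q: "q_chain k Q" "set Q \<subseteq> ?S"
    using Suc.IH[of ?S] Suc.prems by auto
  have "q_chain (Suc k) (G # Q)"
    unfolding q_chain_def
  proof (intro conjI allI impI)
    show "length (G # Q) = Suc k" using Q(1) q_chain_def by simp
  next
    fix i assume i: "Suc i < Suc k"
    show "(G # Q) ! Suc i \<subset> (G # Q) ! i"
    proof (cases i)
      case 0
      have "Q!0 \<in> set Q" using i 0 Q(1) q_chain_def by auto
      then show ?thesis using 0 top Q(2) by auto
    next
      case (Suc i')
      then show ?thesis using Q(1) i unfolding q_chain_def by simp
    qed
  qed
  then show ?case using Q(2) G(1) by (intro exI[of _ "G # Q"]) auto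
qed

lemma sub_diff_self: "A \<subseteq> S - A \<Longrightarrow> A = {}" by blast

lemma packing_lb:
  assumes "q \<ge> 1" "\<forall>X\<in>S0. \<forall>Y\<in>S0. X \<subseteq> Y \<or> Y \<subseteq> X" "finite S0" "\<forall>X\<in>S0. finite X"
  shows "S \<subseteq> S0 \<Longrightarrow> \<exists>P. finite P \<and> (\<forall>Q\<in>P. q_chain q Q \<and> set Q \<subseteq> S) \<and> packing P \<and>
             card S \<le> q * card P + (q - 1)"
proof (induction "card S" arbitrary: S rule: less_induct)
  case less
  have fS: "finite S" using less.prems assms(3) finite_subset by blast
  show ?case
  proof (cases "card S < q")
    case True
    then show ?thesis by (intro exI[of _ "{}"]) (auto simp: packing_def)
  next
    case False
    have "\<forall>X\<in>S. \<forall>Y\<in>S. X \<subseteq> Y \<or> Y \<subseteq> X" "\<forall>X\<in>S. finite X" using assms less.prems by blast+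
    then obtain Q where Q: "q_chain q Q" "set Q \<subseteq> S"
      using chain_to_qchain[of S q] fS False by auto
    have cq: "card (set Q) = q" using qchain_distinct[OF Q(1)] Q(1) distinct_card q_chain_def by metis
    let ?S = "S - set Q"
    have cS: "card ?S = card S - q" using cq Q(2) fS by (simp add: card_Diff_subset)
    have "card ?S < card S" using cS False assms(1) by simp
    then obtain P where P: "finite P" "\<forall>Q\<in>P. q_chain q Q \<and> set Q \<subseteq> ?S" "packing P"
      "card ?S \<le> q * card P + (q - 1)"
      using less.hyps[of ?S] less.prems by blast
    have ne: "set Q \<noteq> {}" using cq assms(1) by auto
    have nQ: "Q \<notin> P"
    proof
      assume "Q \<in> P"
      then have "set Q \<subseteq> S - set Q" using P(2) by blast
      then have "set Q = {}" by (rule sub_diff_self)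
      then show False using ne by simp
    qed
    have "packing (insert Q P)" using P(2,3) unfolding packing_def by blast
    moreover have "card (insert Q P) = card P + 1" using nQ P(1) by simp
    moreover have "\<forall>Q'\<in>insert Q P. q_chain q Q' \<and> set Q' \<subseteq> S" using P(2) Q by blast
    ultimately show ?thesis using P(1,4) cS False
      by (intro exI[of _ "insert Q P"]) (auto simp: algebra_simps)
  qed
qed



definition MA :: "nat \<Rightarrow> nat \<Rightarrow> (nat set \<times> nat) set \<Rightarrow> (nat set set \<times> nat set list) set" where
  "MA n q A = {(\<chi>, Q). \<chi> \<in> full_chains n \<and> Q \<in> valid q A \<chi>}"

lemma nth_in_set_q: "q_chain q Q \<Longrightarrow> k < q \<Longrightarrow> Q!k \<in> set Q"
  unfolding q_chain_def by simp

lemma Tpack_le_Lmem: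
  assumes "\<chi> \<in> full_chains n" "i \<in> {1..q}"
  shows "Tpack q A \<chi> \<le> card (Lmem i (MA n q A) \<inter> \<chi>)"
proof -
  have fin: "finite \<chi>" using fc_props(2)[OF assms(1)] .
  obtain P where P: "P \<subseteq> valid q A \<chi>" "packing P" "card P = Tpack q A \<chi>"
    using Tpack_attained[OF fin] by blast
  have ik: "i - 1 < q" using assms(2) by auto
  have inj: "inj_on (\<lambda>Q. Q!(i-1)) P"
  proof (rule inj_onI)
    fix Q1 Q2 assume h: "Q1 \<in> P" "Q2 \<in> P" "Q1!(i-1) = Q2!(i-1)"
    have "Q1!(i-1) \<in> set Q1" "Q2!(i-1) \<in> set Q2"
      using h(1,2) P(1) nth_in_set_q[OF _ ik] unfolding valid_def by blast+
    then have "set Q1 \<inter> set Q2 \<noteq> {}" using h(3) by (metis disjoint_iff)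
    then show "Q1 = Q2" using P(2) h(1,2) unfolding packing_def by blast
  qed
  have img: "(\<lambda>Q. Q!(i-1)) ` P \<subseteq> Lmem i (MA n q A) \<inter> \<chi>"
  proof
    fix D assume "D \<in> (\<lambda>Q. Q!(i-1)) ` P"
    then obtain Q where Q: "Q \<in> P" "D = Q!(i-1)" by blast
    have v: "Q \<in> valid q A \<chi>" using Q(1) P(1) by blast
    then have "(\<chi>, Q) \<in> MA n q A" using assms(1) unfolding MA_def by simp
    then have "D \<in> Lmem i (MA n q A)" unfolding Lmem_def using Q(2) by blast
    moreover have "D \<in> set Q" using v Q(2) nth_in_set_q[OF _ ik] unfolding valid_def by blast
    moreover have "set Q \<subseteq> \<chi>" using v unfolding valid_def by blast
    ultimately show "D \<in> Lmem i (MA n q A) \<inter> \<chi>" by blast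
  qed
  have "card P = card ((\<lambda>Q. Q!(i-1)) ` P)" using card_image[OF inj] by simp
  also have "\<dots> \<le> card (Lmem i (MA n q A) \<inter> \<chi>)"
    by (rule card_mono[OF _ img]) (use fin in simp)
  finally show ?thesis using P(3) by simp
qed

lemma Tpack_remove:
  assumes "finite \<chi>" "i \<in> {1..q}"
  shows "Tpack q A \<chi> \<le> Tpack q (A - {(F,i)}) \<chi> + (if \<exists>Q\<in>valid q A \<chi>. Q!(i-1) = F then 1 else 0)"
proof -
  obtain P where P: "P \<subseteq> valid q A \<chi>" "packing P" "card P = Tpack q A \<chi>"
    using Tpack_attained[OF assms(1)] by blast
  have ik: "i - 1 < q" using assms(2) by auto
  have fP: "finite P" using P(1) valid_finite[OF assms(1)] finite_subset by blast
  let ?P1 = "{Q\<in>P. Q!(i-1) \<noteq> F}"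
  let ?P2 = "{Q\<in>P. Q!(i-1) = F}"
  have "?P1 \<subseteq> valid q (A - {(F,i)}) \<chi>"
  proof
    fix Q assume Q: "Q \<in> ?P1"
    then have v: "Q \<in> valid q A \<chi>" using P(1) by blast
    have "\<forall>k<q. (Q!k, Suc k) \<in> A - {(F,i)}"
    proof (intro allI impI)
      fix k assume k: "k < q"
      have "(Q!k, Suc k) \<in> A" using v k unfolding valid_def by blast
      moreover have "(Q!k, Suc k) \<noteq> (F, i)"
      proof
        assume "(Q!k, Suc k) = (F, i)"
        then have "k = i - 1" "Q!k = F" by auto
        then show False using Q by simp
      qed
      ultimately show "(Q!k, Suc k) \<in> A - {(F,i)}" by blast
    qed
    then show "Q \<in> valid q (A - {(F,i)}) \<chi>" using v unfolding valid_def by blast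
  qed
  moreover have "packing ?P1" using P(2) unfolding packing_def by blast
  ultimately have t1: "card ?P1 \<le> Tpack q (A - {(F,i)}) \<chi>" by (rule Tpack_ge[OF assms(1)])
  have t2: "card ?P2 \<le> (if \<exists>Q\<in>valid q A \<chi>. Q!(i-1) = F then 1 else 0)"
  proof (cases "\<exists>Q\<in>valid q A \<chi>. Q!(i-1) = F")
    case True
    have "card ?P2 \<le> Suc 0"
    proof (subst card_le_Suc0_iff_eq)
      show "finite ?P2" using fP by simp
      show "\<forall>a1\<in>?P2. \<forall>a2\<in>?P2. a1 = a2"
      proof (intro ballI)
        fix Q1 Q2 assume h: "Q1 \<in> ?P2" "Q2 \<in> ?P2"
        have "Q1!(i-1) \<in> set Q1" "Q2!(i-1) \<in> set Q2"
          using h(1,2) P(1) nth_in_set_q[OF _ ik] unfolding valid_def by blast+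
        then have "set Q1 \<inter> set Q2 \<noteq> {}" using h by (metis (mono_tags, lifting) disjoint_iff mem_Collect_eq)
        then show "Q1 = Q2" using P(2) h(1,2) unfolding packing_def by blast
      qed
    qed
    then show ?thesis using True by simp
  next
    case False
    then have "?P2 = {}" using P(1) by blast
    then show ?thesis using False by (simp only: card.empty if_False)
  qed
  have "card P = card ?P1 + card ?P2"
  proof -
    have "P = ?P1 \<union> ?P2" by blast
    moreover have "?P1 \<inter> ?P2 = {}" by blast
    ultimately show ?thesis using fP card_Un_disjoint[of ?P1 ?P2] by simp
  qed
  then show ?thesis using t1 t2 P(3) by linarith
qed

lemma reduce_family:
  assumes "finite \<F>" "\<forall>F\<in>\<F>. 0 \<le> w F \<and> w F \<le> (1::real)" "c \<ge> 0"
  shows "sum w \<F> \<ge> c \<Longrightarrow> \<exists>\<F>'\<subseteq>\<F>. c \<le> sum w \<F>' \<and> sum w \<F>' \<le> c + 1"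
  using assms(1,2)
proof (induction \<F> rule: finite_induct)
  case empty
  then show ?case using assms(3) by auto
next
  case (insert x F)
  show ?case
  proof (cases "sum w (insert x F) \<le> c + 1")
    case True then show ?thesis using insert.prems(1) by blast
  next
    case False
    then have "sum w F \<ge> c" using insert.hyps insert.prems(2) by simp
    then obtain F' where "F' \<subseteq> F" "c \<le> sum w F'" "sum w F' \<le> c + 1"
      using insert.IH insert.prems(2) by blast
    then show ?thesis by blast
  qed
qed



theorem theorem4p12:
  fixes P :: "'a set" and le :: "'a \<Rightarrow> 'a \<Rightarrow> bool"
  assumes "tree_poset P le"
  shows "\<forall>q::nat. q \<ge> 1 \<longrightarrow> (\<forall>\<epsilon>::real. \<epsilon> > 0 \<longrightarrow> (\<exists>\<delta>::real. \<delta> > 0 \<and>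
    (\<forall>(n::nat) (\<F>::nat set set). \<F> \<subseteq> Btilde n \<and> lubell n \<F> \<ge> real q - 1 + \<epsilon> \<longrightarrow>
      (\<exists>M :: nat \<Rightarrow> (nat set set \<times> nat set list) set.
         (\<forall>j\<le>card P. M j \<subseteq> marked_chains n q \<F>) \<and>
         (\<forall>j<card P. M (Suc j) \<subseteq> M j) \<and>
         (\<forall>j\<in>{1..card P}.
            (\<forall>(\<chi>, Q)\<in>M j. \<forall>F\<in>set Q. robust n q (M (j - 1)) \<delta> F) \<and>
            (\<forall>i\<in>{1..q}. real (card (Lmem i (M j))) \<ge>
                2 * \<epsilon> / (3 * real q) * real (Min ((\<lambda>F. n choose card F) ` \<F>))))))))"
proof (intro allI impI)
  fix q :: nat and \<epsilon> :: real
  assume q: "q \<ge> 1" and e: "\<epsilon> > 0"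
  define \<delta>0 where "\<delta>0 = \<epsilon> / (3 * real q ^ 2 * (real q + \<epsilon>))"
  have qr: "real q \<ge> 1" using q by simp
  have d0: "\<delta>0 > 0" unfolding \<delta>0_def using e qr by simp
  have d0q: "\<delta>0 * real q * (real q + \<epsilon>) = \<epsilon> / (3 * real q)"
  proof -
    have nz: "real q \<noteq> 0" "real q + \<epsilon> \<noteq> 0" using e qr by auto
    have "\<delta>0 * real q * (real q + \<epsilon>) = \<epsilon> * (real q * (real q + \<epsilon>)) / (3 * real q * real q * (real q + \<epsilon>))"
      unfolding \<delta>0_def power2_eq_square by (simp add: algebra_simps)
    also have "\<dots> = \<epsilon> / (3 * real q)"
    proof -
      have y: "3 * real q * real q * (real q + \<epsilon>) \<noteq> 0" "3 * real q \<noteq> 0" using nz by auto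
      show ?thesis unfolding frac_eq_eq[OF y] by (simp add: algebra_simps)
    qed
    finally show ?thesis .
  qed
  show "\<exists>\<delta>::real. \<delta> > 0 \<and>
    (\<forall>(n::nat) (\<F>::nat set set). \<F> \<subseteq> Btilde n \<and> lubell n \<F> \<ge> real q - 1 + \<epsilon> \<longrightarrow>
      (\<exists>M :: nat \<Rightarrow> (nat set set \<times> nat set list) set.
         (\<forall>j\<le>card P. M j \<subseteq> marked_chains n q \<F>) \<and>
         (\<forall>j<card P. M (Suc j) \<subseteq> M j) \<and>
         (\<forall>j\<in>{1..card P}.
            (\<forall>(\<chi>, Q)\<in>M j. \<forall>F\<in>set Q. robust n q (M (j - 1)) \<delta> F) \<and>
            (\<forall>i\<in>{1..q}. real (card (Lmem i (M j))) \<ge>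
                2 * \<epsilon> / (3 * real q) * real (Min ((\<lambda>F. n choose card F) ` \<F>))))))"
  proof (intro exI[of _ "\<delta>0 / 2"] conjI allI impI)
    show "\<delta>0 / 2 > 0" using d0 by simp
    fix n :: nat and \<F> :: "nat set set"
    assume h: "\<F> \<subseteq> Btilde n \<and> lubell n \<F> \<ge> real q - 1 + \<epsilon>"
    have FP: "\<F> \<subseteq> Pow {1..n}" using h unfolding Btilde_def by blast
    have finF: "finite \<F>" using FP by (rule finite_subset) simp
    have wbd: "\<forall>F\<in>\<F>. 0 \<le> 1 / real (n choose card F) \<and> 1 / real (n choose card F) \<le> (1::real)"
    proof
      fix F assume "F \<in> \<F>"
      then have "card F \<le> n" using FP card_mono[of "{1..n}" F] by auto
      then have "(n choose card F) \<ge> 1" by (simp add: Suc_leI)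
      then have "real (n choose card F) \<ge> 1" by simp
      then show "0 \<le> 1 / real (n choose card F) \<and> 1 / real (n choose card F) \<le> (1::real)" by (simp add: divide_le_eq_1, linarith)
    qed
    obtain \<F>' where F': "\<F>' \<subseteq> \<F>" "real q - 1 + \<epsilon> \<le> lubell n \<F>'" "lubell n \<F>' \<le> real q - 1 + \<epsilon> + 1"
      using reduce_family[OF finF wbd, of "real q - 1 + \<epsilon>"] h qr e unfolding lubell_def by auto
    have F'P: "\<F>' \<subseteq> Pow {1..n}" using F'(1) FP by blast
    have finF': "finite \<F>'" using F'(1) finF by (rule finite_subset)
    define FC where "FC = full_chains n"
    define N where "N = card FC"
    have finFC: "finite FC" unfolding FC_def by (rule fc_finite)
    have Npos: "N > 0" unfolding N_def FC_def using fc_nonempty[of n] fc_finite[of n]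
      by (metis card_gt_0_iff empty_iff)
    define U where "U = \<F>' \<times> {1..q}"
    define \<Psi> where "\<Psi> A = (\<Sum>\<chi>\<in>FC. real (Tpack q A \<chi>)) - \<delta>0 * (\<Sum>p\<in>A. real (cnt n (fst p)))" for A
    have finU: "finite U" unfolding U_def using finF' by simp
    have "Max (\<Psi> ` Pow U) \<in> \<Psi> ` Pow U" by (rule Max_in) (use finU in auto)
    then obtain A where A0: "A \<in> Pow U" "Max (\<Psi> ` Pow U) = \<Psi> A" by (rule imageE)
    then have A: "A \<subseteq> U" "\<Psi> A = Max (\<Psi> ` Pow U)" by simp_all
    have Amax: "\<Psi> B \<le> \<Psi> A" if "B \<subseteq> U" for B
      using A(2) that finU by simp
    define M where "M = MA n q A"
    have AU: "A \<subseteq> \<F>' \<times> UNIV" by (rule subset_trans[OF A(1)]) (auto simp: U_def)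
    have valid_sub: "set Q \<subseteq> \<F>'" if "Q \<in> valid q A \<chi>" for Q \<chi>
    proof
      fix D assume "D \<in> set Q"
      then obtain k where k: "k < length Q" "Q!k = D" by (metis in_set_conv_nth)
      have "length Q = q" using that unfolding valid_def q_chain_def by blast
      then have "(Q!k, Suc k) \<in> A" using that k unfolding valid_def by blast
      then show "D \<in> \<F>'" using AU k by blast
    qed
    have Msub_mc: "M \<subseteq> marked_chains n q \<F>"
    proof
      fix x assume "x \<in> M"
      then obtain \<chi> Q where x: "x = (\<chi>, Q)" "\<chi> \<in> full_chains n" "Q \<in> valid q A \<chi>"
        unfolding M_def MA_def by blast
      have "set Q \<subseteq> \<F>" using valid_sub[OF x(3)] F'(1) by blast
      moreover have "q_chain q Q" "set Q \<subseteq> \<chi>" using x(3) unfolding valid_def by simp_all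
      ultimately show "x \<in> marked_chains n q \<F>" using x(1,2) unfolding marked_chains_def by simp
    qed
    have key: "cond_prob n W F > \<delta>0 / 2"
      if i: "i \<in> {1..q}" and ne: "Msub M F i \<noteq> {}"
        and hit: "\<forall>(\<chi>, Q)\<in>Msub M F i. set Q \<inter> W \<noteq> {}" for F i W
    proof -
      obtain \<chi>0 Q0 where c0: "(\<chi>0, Q0) \<in> M" "Q0!(i-1) = F" using ne unfolding Msub_def by blast
      have ik: "i - 1 < q" using i by auto
      have v0: "\<chi>0 \<in> full_chains n" "Q0 \<in> valid q A \<chi>0" using c0(1) unfolding M_def MA_def by blast+
      have FiA: "(F, i) \<in> A" using v0(2) ik c0(2) i unfolding valid_def by force
      have "F \<in> \<chi>0" using v0(2) c0(2) nth_in_set_q[OF _ ik] unfolding valid_def by blast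
      then have "\<chi>0 \<in> {\<chi>\<in>FC. F \<in> \<chi>}" using v0(1) unfolding FC_def by blast
      moreover have "finite {\<chi>\<in>FC. F \<in> \<chi>}" using finFC by simp
      ultimately have cpos: "cnt n F > 0" unfolding cnt_def FC_def[symmetric]
        by (simp only: card_gt_0_iff) blast
      define B where "B = A - {(F, i)}"
      have BU: "B \<subseteq> U" using A(1) unfolding B_def by blast
      have finA: "finite A" using A(1) finU by (rule finite_subset)
      have sA: "(\<Sum>p\<in>A. real (cnt n (fst p))) = real (cnt n F) + (\<Sum>p\<in>B. real (cnt n (fst p)))"
        unfolding B_def using sum.remove[OF finA FiA, of "\<lambda>p. real (cnt n (fst p))"] by simp
      define num where "num = card {\<chi>\<in>FC. F \<in> \<chi> \<and> \<chi> \<inter> W \<noteq> {}}"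
      have pt: "real (Tpack q A \<chi>) \<le> real (Tpack q B \<chi>) + (if F \<in> \<chi> \<and> \<chi> \<inter> W \<noteq> {} then 1 else 0)"
        if "\<chi> \<in> FC" for \<chi>
      proof -
        have fin: "finite \<chi>" using fc_props(2) that unfolding FC_def by blast
        have "(\<exists>Q\<in>valid q A \<chi>. Q!(i-1) = F) \<Longrightarrow> F \<in> \<chi> \<and> \<chi> \<inter> W \<noteq> {}"
        proof -
          assume "\<exists>Q\<in>valid q A \<chi>. Q!(i-1) = F"
          then obtain Q where Q: "Q \<in> valid q A \<chi>" "Q!(i-1) = F" by blast
          have "(\<chi>, Q) \<in> Msub M F i" using Q that unfolding Msub_def M_def MA_def FC_def by blast
          then have "set Q \<inter> W \<noteq> {}" using hit by blast
          moreover have "set Q \<subseteq> \<chi>" using Q(1) unfolding valid_def by blast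
          moreover have "F \<in> set Q" using Q nth_in_set_q[OF _ ik] unfolding valid_def by blast
          ultimately show "F \<in> \<chi> \<and> \<chi> \<inter> W \<noteq> {}" by blast
        qed
        then have "(if \<exists>Q\<in>valid q A \<chi>. Q!(i-1) = F then 1 else 0) \<le> (if F \<in> \<chi> \<and> \<chi> \<inter> W \<noteq> {} then 1 else (0::nat))"
          by auto
        moreover have "Tpack q A \<chi> \<le> Tpack q B \<chi> + (if \<exists>Q\<in>valid q A \<chi>. Q!(i-1) = F then 1 else 0)"
          unfolding B_def by (rule Tpack_remove[OF fin i])
        ultimately have "Tpack q A \<chi> \<le> Tpack q B \<chi> + (if F \<in> \<chi> \<and> \<chi> \<inter> W \<noteq> {} then 1 else 0)"
          by linarith
        then show ?thesis by (simp split: if_splits)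
      qed
      have "(\<Sum>\<chi>\<in>FC. real (Tpack q A \<chi>)) \<le> (\<Sum>\<chi>\<in>FC. real (Tpack q B \<chi>) + (if F \<in> \<chi> \<and> \<chi> \<inter> W \<noteq> {} then 1 else 0))"
        by (rule sum_mono) (rule pt)
      also have "\<dots> = (\<Sum>\<chi>\<in>FC. real (Tpack q B \<chi>)) + real num"
        unfolding num_def sum.distrib using finFC by (simp add: sum.inter_filter[symmetric])
      finally have s1: "(\<Sum>\<chi>\<in>FC. real (Tpack q A \<chi>)) \<le> (\<Sum>\<chi>\<in>FC. real (Tpack q B \<chi>)) + real num" .
      have "\<Psi> B \<le> \<Psi> A" using Amax[OF BU] .
      then have l1: "\<delta>0 * real (cnt n F) \<le> real num" using s1 sA unfolding \<Psi>_def by (simp add: algebra_simps)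
      have "cond_prob n W F = real num / real (cnt n F)"
        unfolding cond_prob_def num_def cnt_def FC_def by simp
      then have "cond_prob n W F * real (cnt n F) = real num" using cpos by simp
      then have "\<delta>0 * real (cnt n F) \<le> cond_prob n W F * real (cnt n F)" using l1 by simp
      then have "cond_prob n W F \<ge> \<delta>0" by (rule mult_right_le_imp_le) (use cpos in simp)
      then show ?thesis using d0 by simp
    qed
    have rob: "robust n q M (\<delta>0 / 2) F" for F
      unfolding robust_def
    proof (intro ballI conjI)
      fix i assume i: "i \<in> {1..q}"
      show "\<not> lower_bad n M i (\<delta>0 / 2) F"
      proof
        assume "lower_bad n M i (\<delta>0 / 2) F"
        then obtain W where w1: "Msub M F i \<noteq> {}" and w2: "\<forall>(\<chi>, Q)\<in>Msub M F i. set Q \<inter> W \<noteq> {}" and w3: "cond_prob n W F \<le> \<delta>0 / 2"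
          unfolding lower_bad_def by blast
        have "cond_prob n W F > \<delta>0 / 2" by (rule key[OF i w1 w2])
        then show False using w3 by simp
      qed
      show "\<not> upper_bad n M i (\<delta>0 / 2) F"
      proof
        assume "upper_bad n M i (\<delta>0 / 2) F"
        then obtain W where w1: "Msub M F i \<noteq> {}" and w2: "\<forall>(\<chi>, Q)\<in>Msub M F i. set Q \<inter> W \<noteq> {}" and w3: "cond_prob n W F \<le> \<delta>0 / 2"
          unfolding upper_bad_def by blast
        have "cond_prob n W F > \<delta>0 / 2" by (rule key[OF i w1 w2])
        then show False using w3 by simp
      qed
    qed
    define mu where "mu = lubell n \<F>'"
    have sumF': "real (\<Sum>\<chi>\<in>FC. card (\<F>' \<inter> \<chi>)) = real N * mu"
      unfolding FC_def N_def mu_def by (rule sum_cnt[OF F'P])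
    have sumcnt: "(\<Sum>F\<in>\<F>'. real (cnt n F)) = real N * mu"
    proof -
      have "(\<Sum>F\<in>\<F>'. real (cnt n F)) = (\<Sum>F\<in>\<F>'. real N * (1 / real (n choose card F)))"
      proof (rule sum.cong[OF refl])
        fix F assume "F \<in> \<F>'"
        then have "F \<subseteq> {1..n}" using F'P by blast
        then show "real (cnt n F) = real N * (1 / real (n choose card F))"
          using cnt_formula[of F n] unfolding N_def FC_def by simp
      qed
      then show ?thesis unfolding mu_def lubell_def by (simp add: sum_distrib_left)
    qed
    have sumU: "(\<Sum>p\<in>U. real (cnt n (fst p))) = real q * (real N * mu)"
    proof -
      have cp: "(\<lambda>p. real (cnt n (fst p))) = (\<lambda>(F::nat set, i::nat). real (cnt n F))" by (simp add: fun_eq_iff)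
      have "(\<Sum>p\<in>U. real (cnt n (fst p))) = (\<Sum>F\<in>\<F>'. \<Sum>i\<in>{1..q}. real (cnt n F))"
        unfolding U_def cp by (rule sum.cartesian_product[symmetric])
      also have "\<dots> = (\<Sum>F\<in>\<F>'. real q * real (cnt n F))" by simp
      also have "\<dots> = real q * (\<Sum>F\<in>\<F>'. real (cnt n F))" by (rule sum_distrib_left[symmetric])
      also have "\<dots> = real q * (real N * mu)" using sumcnt by simp
      finally show ?thesis .
    qed
    have packU: "real (card (\<F>' \<inter> \<chi>)) \<le> real q * real (Tpack q U \<chi>) + (real q - 1)" if "\<chi> \<in> FC" for \<chi>
    proof -
      have fc: "\<chi> \<in> full_chains n" using that FC_def by simp
      have comp: "\<forall>X\<in>\<F>' \<inter> \<chi>. \<forall>Y\<in>\<F>' \<inter> \<chi>. X \<subseteq> Y \<or> Y \<subseteq> X" using fc_props(3)[OF fc] by blast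
      have fin: "finite (\<F>' \<inter> \<chi>)" using fc_props(2)[OF fc] by simp
      have fin2: "\<forall>X\<in>\<F>' \<inter> \<chi>. finite X"
      proof
        fix X assume "X \<in> \<F>' \<inter> \<chi>"
        then have "X \<subseteq> {1..n}" using F'P by blast
        then show "finite X" by (rule finite_subset) simp
      qed
      obtain Pk where Pk: "finite Pk" "\<forall>Q\<in>Pk. q_chain q Q \<and> set Q \<subseteq> \<F>' \<inter> \<chi>" "packing Pk"
        "card (\<F>' \<inter> \<chi>) \<le> q * card Pk + (q - 1)"
        using packing_lb[OF q comp fin fin2, of "\<F>' \<inter> \<chi>"] by blast
      have "Pk \<subseteq> valid q U \<chi>"
      proof
        fix Q assume Q: "Q \<in> Pk"
        then have qc: "q_chain q Q" and sQ: "set Q \<subseteq> \<F>' \<inter> \<chi>" using Pk(2) by blast+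
        have "\<forall>k<q. (Q!k, Suc k) \<in> U"
        proof (intro allI impI)
          fix k assume k: "k < q"
          have "Q!k \<in> set Q" by (rule nth_in_set_q[OF qc k])
          then have "Q!k \<in> \<F>'" using sQ by blast
          then show "(Q!k, Suc k) \<in> U" unfolding U_def using k by simp
        qed
        then show "Q \<in> valid q U \<chi>" unfolding valid_def using qc sQ by blast
      qed
      then have "card Pk \<le> Tpack q U \<chi>" using Tpack_ge[OF fc_props(2)[OF fc] _ Pk(3)] by blast
      then have "card (\<F>' \<inter> \<chi>) \<le> q * Tpack q U \<chi> + (q - 1)" using Pk(4)
        by (meson add_le_mono1 le_trans mult_le_mono2)
      then have "real (card (\<F>' \<inter> \<chi>)) \<le> real (q * Tpack q U \<chi> + (q - 1))" by linarith
      then show ?thesis using q by (simp add: of_nat_diff)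
    qed
    have sTU: "real N * mu \<le> real q * (\<Sum>\<chi>\<in>FC. real (Tpack q U \<chi>)) + real N * (real q - 1)"
    proof -
      have "real N * mu = (\<Sum>\<chi>\<in>FC. real (card (\<F>' \<inter> \<chi>)))" using sumF' by simp
      also have "\<dots> \<le> (\<Sum>\<chi>\<in>FC. real q * real (Tpack q U \<chi>) + (real q - 1))"
        by (rule sum_mono) (rule packU)
      also have "\<dots> = real q * (\<Sum>\<chi>\<in>FC. real (Tpack q U \<chi>)) + real N * (real q - 1)"
        unfolding N_def by (simp add: sum.distrib sum_distrib_left)
      finally show ?thesis .
    qed
    have sTA_ge: "(\<Sum>\<chi>\<in>FC. real (Tpack q A \<chi>)) \<ge> \<Psi> A"
    proof -
      have "(\<Sum>p\<in>A. real (cnt n (fst p))) \<ge> 0" by (rule sum_nonneg) simp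
      then show ?thesis unfolding \<Psi>_def using d0 by (simp add: mult_nonneg_nonneg)
    qed
    have PsiU: "\<Psi> U \<le> \<Psi> A" by (rule Amax) simp
    have mu_bds: "real q - 1 + \<epsilon> \<le> mu" "mu \<le> real q + \<epsilon>" using F'(2,3) unfolding mu_def by simp_all
    have bigT: "(\<Sum>\<chi>\<in>FC. real (Tpack q A \<chi>)) \<ge> real N * (2 * \<epsilon> / (3 * real q))"
    proof -
      define S where "S = (\<Sum>\<chi>\<in>FC. real (Tpack q U \<chi>))"
      have PsiU': "\<Psi> U = S - \<delta>0 * (real q * (real N * mu))" unfolding \<Psi>_def S_def sumU by simp
      have a: "real q * S \<ge> real N * mu - real N * (real q - 1)" using sTU unfolding S_def by simp
      have b: "real N * mu - real N * (real q - 1) \<ge> real N * \<epsilon>"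
        using mu_bds(1) Npos by (simp add: right_diff_distrib[symmetric] mult_left_mono)
      have Sge: "S \<ge> real N * \<epsilon> / real q" using a b qr by (simp add: field_simps)
      have c: "\<delta>0 * (real q * (real N * mu)) \<le> real N * (\<epsilon> / (3 * real q))"
      proof -
        have "\<delta>0 * (real q * (real N * mu)) = real N * (\<delta>0 * real q * mu)" by (simp add: algebra_simps)
        also have "\<dots> \<le> real N * (\<delta>0 * real q * (real q + \<epsilon>))"
          using mu_bds(2) d0 qr by (intro mult_left_mono) simp_all
        also have "\<dots> = real N * (\<epsilon> / (3 * real q))" using d0q by simp
        finally show ?thesis .
      qed
      have "real N * (2 * \<epsilon> / (3 * real q)) = real N * \<epsilon> / real q - real N * (\<epsilon> / (3 * real q))"
        using qr by (simp add: field_simps)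
      also have "\<dots> \<le> \<Psi> U" unfolding PsiU' by (rule diff_mono[OF Sge c])
      finally show ?thesis using PsiU sTA_ge by simp
    qed
    have minpos: "Min ((\<lambda>F. n choose card F) ` \<F>) > 0"
    proof -
      have ne: "\<F> \<noteq> {}"
      proof
        assume "\<F> = {}"
        then have "lubell n \<F> = 0" unfolding lubell_def by simp
        then show False using h qr e by simp
      qed
      have "\<forall>F\<in>\<F>. (n choose card F) > 0"
      proof
        fix F assume "F \<in> \<F>"
        then have "card F \<le> n" using FP card_mono[of "{1..n}" F] by auto
        then show "(n choose card F) > 0" by simp
      qed
      then show ?thesis using finF ne by (simp add: Min_gr_iff)
    qed
    have Lbound: "real (card (Lmem i M)) \<ge> 2 * \<epsilon> / (3 * real q) * real (Min ((\<lambda>F. n choose card F) ` \<F>))"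
      if i: "i \<in> {1..q}" for i
    proof -
      let ?L = "Lmem i M"
      let ?m = "Min ((\<lambda>F. n choose card F) ` \<F>)"
      have LF: "?L \<subseteq> \<F>'"
      proof
        fix D assume "D \<in> ?L"
        then obtain \<chi> Q where "(\<chi>, Q) \<in> M" "Q!(i-1) = D" unfolding Lmem_def by blast
        then have "Q \<in> valid q A \<chi>" "D \<in> set Q"
          using nth_in_set_q[of q Q "i-1"] i unfolding M_def MA_def valid_def by auto
        then show "D \<in> \<F>'" using valid_sub by blast
      qed
      have LP: "?L \<subseteq> Pow {1..n}" using LF F'P by blast
      have finL: "finite ?L" using LF finF' by (rule finite_subset)
      have "real N * (2 * \<epsilon> / (3 * real q)) \<le> (\<Sum>\<chi>\<in>FC. real (Tpack q A \<chi>))" using bigT .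
      also have "\<dots> \<le> (\<Sum>\<chi>\<in>FC. real (card (?L \<inter> \<chi>)))"
      proof (rule sum_mono)
        fix \<chi> assume "\<chi> \<in> FC"
        then show "real (Tpack q A \<chi>) \<le> real (card (?L \<inter> \<chi>))"
          using Tpack_le_Lmem[of \<chi> n i q A] i unfolding FC_def M_def by simp
      qed
      also have "\<dots> = real N * lubell n ?L"
        using sum_cnt[OF LP] unfolding FC_def N_def by simp
      also have "\<dots> \<le> real N * (real (card ?L) / real ?m)"
      proof (rule mult_left_mono)
        have "lubell n ?L = (\<Sum>F\<in>?L. 1 / real (n choose card F))" unfolding lubell_def by simp
        also have "\<dots> \<le> (\<Sum>F\<in>?L. 1 / real ?m)"
        proof (rule sum_mono)
          fix F assume "F \<in> ?L"
          then have "F \<in> \<F>" using LF F'(1) by blast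
          then have "?m \<le> n choose card F" using finF by simp
          then show "1 / real (n choose card F) \<le> 1 / real ?m" using minpos
            by (simp add: frac_le)
        qed
        also have "\<dots> = real (card ?L) / real ?m" by simp
        finally show "lubell n ?L \<le> real (card ?L) / real ?m" .
      qed simp
      finally have "real N * (2 * \<epsilon> / (3 * real q)) \<le> real N * (real (card ?L) / real ?m)" .
      then have "2 * \<epsilon> / (3 * real q) \<le> real (card ?L) / real ?m" by (rule mult_left_le_imp_le) (use Npos in simp)
      then show ?thesis using minpos by (simp add: field_simps)
    qed
    show "\<exists>M :: nat \<Rightarrow> (nat set set \<times> nat set list) set.
         (\<forall>j\<le>card P. M j \<subseteq> marked_chains n q \<F>) \<and>
         (\<forall>j<card P. M (Suc j) \<subseteq> M j) \<and>
         (\<forall>j\<in>{1..card P}.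
            (\<forall>(\<chi>, Q)\<in>M j. \<forall>F\<in>set Q. robust n q (M (j - 1)) (\<delta>0 / 2) F) \<and>
            (\<forall>i\<in>{1..q}. real (card (Lmem i (M j))) \<ge>
                2 * \<epsilon> / (3 * real q) * real (Min ((\<lambda>F. n choose card F) ` \<F>))))"
      apply (rule exI[of _ "\<lambda>j. M"])
      using Msub_mc rob Lbound by auto
  qed
qed


end
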